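(* Let $\kappa_{rg}\in[0,1)$ and $\epsilon\in(0,1)$, and let $k_\epsilon=\lceil\epsilon^{-2}\rceil$. Consider the (inexact) Newton method on $\mathbb{R}^2$: $z_{k+1}=z_k+\sigma_k$ with $\nabla^2h(z_k)\sigma_k=-\nabla h(z_k)+r_k$, where each component of $r_k$ is bounded in absolute value by $\kappa_{rg}$ times the absolute value of the corresponding component of $\nabla h(z_k)$ (in particular $r_k=0$ is allowed). Then there exists a twice continuously differentiable function $h^N_\epsilon:\mathbb{R}^2\to\mathbb{R}$ with globally Lipschitz continuous gradient and with values in a bounded interval independent of $\epsilon$, such that, when this method is applied to $h^N_\epsilon$ from $z_0=(0,0)$: the Hessians $\nabla^2h^N_\epsilon(z_k)$ are positive definite, the Hessian of $h^N_\epsilon$ is Lipschitz continuous on each segment $[z_k,z_{k+1}]$, $k=0,\dots,k_\epsilon-1$, with a Lipschitz constant independent of $\epsilon$ and $k$, $\|\nabla h^N_\epsilon(z_k)\|>\epsilon$ for $k<k_\epsilon$, and $\|\nabla h^N_\epsilon(z_{k_\epsilon})\|\le\epsilon\sqrt{1+\epsilon^2}$.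
   Context: $\|\cdot\|$ denotes the Euclidean norm. *)

theory Defs
  imports "HOL-Analysis.Analysis"
begin

definition pos_def_mat :: "real^'n^'n \<Rightarrow> bool" where
  "pos_def_mat A \<longleftrightarrow> (\<forall>v. v \<noteq> 0 \<longrightarrow> 0 < v \<bullet> (A *v v))"

text \<open>The residual of the inexact Newton step is written componentwise as
  r_k,i = theta_k,i * grad h(z_k)_i with |theta_k,i| <= kappa; this is exactly the
  condition |r_k,i| <= kappa |grad h(z_k)_i|.\<close>
definition admissible_residuals :: "real \<Rightarrow> (nat \<Rightarrow> real^2) \<Rightarrow> bool" where
  "admissible_residuals \<kappa> \<theta> \<longleftrightarrow> (\<forall>k i. \<bar>\<theta> k $ i\<bar> \<le> \<kappa>)"

definition inexact_newton_run ::
  "(real^2 \<Rightarrow> real^2) \<Rightarrow> (real^2 \<Rightarrow> real^2^2) \<Rightarrow> (nat \<Rightarrow> real^2) \<Rightarrow> (nat \<Rightarrow> real^2) \<Rightarrow> nat \<Rightarrow> bool"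
  where
  "inexact_newton_run g H \<theta> z n \<longleftrightarrow>
     z 0 = 0 \<and>
     (\<forall>k<n. H (z k) *v (z (Suc k) - z k) = - g (z k) + (\<chi> i. \<theta> k $ i * g (z k) $ i))"

end

theory Submission
  imports Defs
begin


lemma deriv_maxpow:
  assumes "n \<ge> 2"
  shows "((\<lambda>u::real. (max 0 u) ^ n) has_real_derivative (of_nat n * (max 0 u) ^ (n - 1))) (at u)"
proof (cases "u = 0")
  case True
  have "((\<lambda>h::real. ((max 0 (0 + h)) ^ n - (max 0 0) ^ n) / h) \<longlongrightarrow> 0) (at 0)"
  proof (rule Lim_null_comparison[where g="\<lambda>h. \<bar>h\<bar> ^ (n - 1)"])
    show "\<forall>\<^sub>F h in at 0. norm (((max 0 (0 + h)) ^ n - (max 0 0) ^ n) / h) \<le> \<bar>h\<bar> ^ (n - 1)"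
    proof (rule always_eventually, rule allI)
      fix h :: real
      have "\<bar>max 0 h\<bar> \<le> \<bar>h\<bar>" by auto
      hence a: "\<bar>max 0 h\<bar> ^ n \<le> \<bar>h\<bar> ^ n" by (simp add: power_mono)
      have "\<bar>h\<bar> ^ n = \<bar>h\<bar> * \<bar>h\<bar> ^ (n - 1)" using assms
        by (metis Suc_diff_1 le_trans one_le_numeral not_one_le_zero not_less_eq_eq power_Suc zero_less_iff_neq_zero)
      show "norm (((max 0 (0 + h)) ^ n - (max 0 0) ^ n) / h) \<le> \<bar>h\<bar> ^ (n - 1)"
      proof (cases "h = 0")
        case False
        have "norm (((max 0 (0 + h)) ^ n - (max 0 0) ^ n) / h) = \<bar>max 0 h\<bar> ^ n / \<bar>h\<bar>"
          using assms by (simp add: power_abs)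
        also have "\<dots> \<le> \<bar>h\<bar> ^ n / \<bar>h\<bar>" using a by (simp add: divide_right_mono)
        also have "\<dots> = \<bar>h\<bar> ^ (n - 1)" using \<open>\<bar>h\<bar> ^ n = _\<close> False by simp
        finally show ?thesis .
      qed simp
    qed
    show "((\<lambda>h. \<bar>h\<bar> ^ (n - 1)) \<longlongrightarrow> 0) (at (0::real))"
    proof -
      have "((\<lambda>h::real. \<bar>h\<bar> ^ (n - 1)) \<longlongrightarrow> \<bar>0\<bar> ^ (n - 1)) (at 0)"
        by (intro tendsto_intros)
      moreover have "\<bar>0::real\<bar> ^ (n - 1) = 0" using assms by simp
      ultimately show ?thesis by metis
    qed
  qed
  hence "((\<lambda>u::real. (max 0 u) ^ n) has_real_derivative 0) (at 0)"
    by (simp add: DERIV_def)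
  moreover have "real n * (max 0 u) ^ (n - 1) = 0" using True assms by simp
  ultimately show ?thesis using True by metis
next
  case False
  show ?thesis
  proof (cases "u > 0")
    case True
    have d: "((\<lambda>u::real. u ^ n) has_real_derivative (of_nat n * u ^ (n - 1))) (at u)"
      using DERIV_pow[of n u] by simp
    show ?thesis
      apply (rule has_field_derivative_transform_within_open[where S="{0<..}"])
      using d True by auto
  next
    case False2: False
    hence "u < 0" using False by simp
    have z: "real n * (max 0 u) ^ (n - 1) = 0" "\<And>x::real. x < 0 \<Longrightarrow> (max 0 x) ^ n = 0"
      using \<open>u < 0\<close> assms by (auto simp: max_def)
    have d: "((\<lambda>u::real. 0) has_real_derivative 0) (at u)" by simp
    show ?thesis
      unfolding z(1)
      apply (rule has_field_derivative_transform_within_open[where S="{..<0}", OF d])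
      using \<open>u < 0\<close> z(2) by auto
  qed
qed

definition mpow :: "nat \<Rightarrow> real \<Rightarrow> real" where "mpow n u = (max 0 u) ^ n"

lemma deriv_mpow_comp:
  assumes "n \<ge> 2" "(f has_real_derivative f') (at t)"
  shows "((\<lambda>t. mpow n (f t)) has_real_derivative (of_nat n * mpow (n - 1) (f t) * f')) (at t)"
  unfolding mpow_def using DERIV_chain2[OF deriv_maxpow[OF assms(1)] assms(2)] by simp

lemma mpow4_d[derivative_intros]: "(f has_real_derivative f') (at t) \<Longrightarrow> ((\<lambda>t. mpow 4 (f t)) has_real_derivative (4 * mpow 3 (f t) * f')) (at t)"
  using deriv_mpow_comp[of 4 f f' t] by simp
lemma mpow3_d[derivative_intros]: "(f has_real_derivative f') (at t) \<Longrightarrow> ((\<lambda>t. mpow 3 (f t)) has_real_derivative (3 * mpow 2 (f t) * f')) (at t)"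
  using deriv_mpow_comp[of 3 f f' t] by simp
lemma mpow2_d[derivative_intros]: "(f has_real_derivative f') (at t) \<Longrightarrow> ((\<lambda>t. mpow 2 (f t)) has_real_derivative (2 * mpow 1 (f t) * f')) (at t)"
  using deriv_mpow_comp[of 2 f f' t] by simp

lemma mpow_cont[continuous_intros]: "isCont f t \<Longrightarrow> isCont (\<lambda>t. mpow n (f t)) t"
  unfolding mpow_def by (intro continuous_intros)

definition b0 :: "real \<Rightarrow> real" where "b0 t = mpow 4 (1 - t\<^sup>2)"
definition b1 :: "real \<Rightarrow> real" where "b1 t = -8 * t * mpow 3 (1 - t\<^sup>2)"
definition b2 :: "real \<Rightarrow> real" where "b2 t = -8 * mpow 3 (1 - t\<^sup>2) + 48 * t\<^sup>2 * mpow 2 (1 - t\<^sup>2)"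
definition b3 :: "real \<Rightarrow> real" where "b3 t = 144 * t * mpow 2 (1 - t\<^sup>2) - 192 * t ^ 3 * mpow 1 (1 - t\<^sup>2)"

lemma b0_deriv: "(b0 has_real_derivative b1 t) (at t)"
  unfolding b0_def b1_def
  apply (rule derivative_eq_intros refl)+ apply (simp add: algebra_simps power2_eq_square power3_eq_cube) done

lemma b1_deriv: "(b1 has_real_derivative b2 t) (at t)"
  unfolding b1_def b2_def
  apply (rule derivative_eq_intros refl)+ apply (simp add: algebra_simps power2_eq_square power3_eq_cube) done

lemma b2_deriv: "(b2 has_real_derivative b3 t) (at t)"
  unfolding b2_def b3_def
  apply (rule derivative_eq_intros refl)+ apply (simp add: algebra_simps power2_eq_square power3_eq_cube) done

lemma b3_cont: "isCont b3 t"
  unfolding b3_def by (intro continuous_intros)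

lemma b_vanish:
  assumes "\<bar>t\<bar> \<ge> 1"
  shows "b0 t = 0" "b1 t = 0" "b2 t = 0" "b3 t = 0"
proof -
  have "t\<^sup>2 \<ge> 1" using assms abs_le_square_iff[of 1 t] by simp
  hence "max 0 (1 - t\<^sup>2) = 0" by simp
  thus "b0 t = 0" "b1 t = 0" "b2 t = 0" "b3 t = 0"
    by (simp_all add: b0_def b1_def b2_def b3_def mpow_def)
qed

lemma b_at0: "b0 0 = 1" "b1 0 = 0" "b2 0 = -8"
  by (simp_all add: b0_def b1_def b2_def mpow_def)

lemma b0_d[derivative_intros]: "(f has_real_derivative f') (at t) \<Longrightarrow> ((\<lambda>t. b0 (f t)) has_real_derivative b1 (f t) * f') (at t)"
  by (rule DERIV_chain2[OF b0_deriv])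
lemma b1_d[derivative_intros]: "(f has_real_derivative f') (at t) \<Longrightarrow> ((\<lambda>t. b1 (f t)) has_real_derivative b2 (f t) * f') (at t)"
  by (rule DERIV_chain2[OF b1_deriv])
lemma b2_d[derivative_intros]: "(f has_real_derivative f') (at t) \<Longrightarrow> ((\<lambda>t. b2 (f t)) has_real_derivative b3 (f t) * f') (at t)"
  by (rule DERIV_chain2[OF b2_deriv])

definition E0 :: "real \<Rightarrow> real" where "E0 t = t * b0 t"
definition E1 :: "real \<Rightarrow> real" where "E1 t = b0 t + t * b1 t"
definition E2 :: "real \<Rightarrow> real" where "E2 t = 2 * b1 t + t * b2 t"
definition E3 :: "real \<Rightarrow> real" where "E3 t = 3 * b2 t + t * b3 t"
definition F0 :: "real \<Rightarrow> real" where "F0 t = t\<^sup>2 * b0 t / 2"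
definition F1 :: "real \<Rightarrow> real" where "F1 t = t * b0 t + t\<^sup>2 * b1 t / 2"
definition F2 :: "real \<Rightarrow> real" where "F2 t = b0 t + 2 * t * b1 t + t\<^sup>2 * b2 t / 2"
definition F3 :: "real \<Rightarrow> real" where "F3 t = 3 * b1 t + 3 * t * b2 t + t\<^sup>2 * b3 t / 2"

lemma E0_d: "(E0 has_real_derivative E1 t) (at t)"
  unfolding E0_def E1_def
  apply (rule derivative_eq_intros refl)+ apply (simp add: algebra_simps) done
lemma E1_d: "(E1 has_real_derivative E2 t) (at t)"
  unfolding E1_def E2_def
  apply (rule derivative_eq_intros refl)+ apply (simp add: algebra_simps) done
lemma E2_d: "(E2 has_real_derivative E3 t) (at t)"
  unfolding E2_def E3_def
  apply (rule derivative_eq_intros refl)+ apply (simp add: algebra_simps) done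
lemma F0_d: "(F0 has_real_derivative F1 t) (at t)"
  unfolding F0_def F1_def
  by (auto intro!: derivative_eq_intros simp: algebra_simps power2_eq_square)
lemma F1_d: "(F1 has_real_derivative F2 t) (at t)"
  unfolding F1_def F2_def
  by (auto intro!: derivative_eq_intros simp: algebra_simps power2_eq_square)
lemma F2_d: "(F2 has_real_derivative F3 t) (at t)"
  unfolding F2_def F3_def
  by (auto intro!: derivative_eq_intros simp: algebra_simps power2_eq_square)

lemma b_cont: "isCont b0 t" "isCont b1 t" "isCont b2 t" "isCont b3 t"
  using b0_deriv b1_deriv b2_deriv b3_cont DERIV_isCont by blast+

lemma E_cont: "isCont E0 t" "isCont E2 t" "isCont E3 t" "isCont F0 t" "isCont F2 t" "isCont F3 t"
  unfolding E0_def E2_def E3_def F0_def F2_def F3_def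
  by (auto intro!: continuous_intros b_cont)

lemma EF_vanish:
  assumes "\<bar>t\<bar> \<ge> 1"
  shows "E0 t = 0" "E1 t = 0" "E2 t = 0" "E3 t = 0" "F0 t = 0" "F1 t = 0" "F2 t = 0" "F3 t = 0"
  using b_vanish[OF assms]
  by (simp_all add: E0_def E1_def E2_def E3_def F0_def F1_def F2_def F3_def)

lemma EF_int:
  fixes k j :: nat
  shows "E1 (real k - real j) = (if j = k then 1 else 0)"
        "F1 (real k - real j) = 0"
        "E2 (real k - real j) = 0"
        "F2 (real k - real j) = (if j = k then 1 else 0)"
proof -
  have "j = k \<or> \<bar>real k - real j\<bar> \<ge> 1" by auto
  thus "E1 (real k - real j) = (if j = k then 1 else 0)"
        "F1 (real k - real j) = 0"
        "E2 (real k - real j) = 0"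
        "F2 (real k - real j) = (if j = k then 1 else 0)"
    using EF_vanish[of "real k - real j"]
    by (auto simp: E1_def E2_def F1_def F2_def b_at0)
qed

lemma bound_ex:
  fixes f :: "real \<Rightarrow> real"
  assumes "\<And>t. isCont f t" "\<And>t. \<bar>t\<bar> \<ge> 1 \<Longrightarrow> f t = 0"
  shows "\<exists>B. \<forall>t. \<bar>f t\<bar> \<le> B"
proof -
  have "\<forall>x. -1 \<le> x \<and> x \<le> 1 \<longrightarrow> isCont (\<lambda>t. \<bar>f t\<bar>) x"
    using assms(1) by (auto intro: continuous_intros)
  then obtain M where M: "\<forall>x. -1 \<le> x \<and> x \<le> 1 \<longrightarrow> \<bar>f x\<bar> \<le> M"
    using isCont_bounded[of "-1" 1 "\<lambda>t. \<bar>f t\<bar>"] by auto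
  have "\<bar>f t\<bar> \<le> M" for t
  proof (cases "\<bar>t\<bar> \<ge> 1")
    case True
    thus ?thesis using assms(2) M[rule_format, of 0] by simp
  next
    case False
    hence "-1 \<le> t" "t \<le> 1" by (simp_all add: abs_if split: if_splits)
    thus ?thesis using M by blast
  qed
  thus ?thesis by blast
qed

lemma two_term:
  fixes w :: "nat \<Rightarrow> real"
  assumes "\<And>j. \<bar>w j\<bar> \<le> W" "\<And>j. w j \<noteq> 0 \<Longrightarrow> \<bar>x - real j\<bar> < 1"
  shows "\<bar>\<Sum>j<M. w j\<bar> \<le> 2 * W"
proof -
  define T where "T = {nat \<lfloor>x\<rfloor>, Suc (nat \<lfloor>x\<rfloor>)}"
  have sub: "w j = 0" if "j \<notin> T" for j
  proof (rule ccontr)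
    assume "w j \<noteq> 0"
    hence "\<bar>x - real j\<bar> < 1" using assms(2) by blast
    hence "real j > x - 1" "real j < x + 1" by auto
    hence "real j > real_of_int \<lfloor>x\<rfloor> - 1" "real j < real_of_int \<lfloor>x\<rfloor> + 2"
      by (linarith, linarith)
    hence "int j > \<lfloor>x\<rfloor> - 1" "int j < \<lfloor>x\<rfloor> + 2" by linarith+
    hence "j \<in> T" unfolding T_def by auto
    thus False using that by blast
  qed
  have W0: "W \<ge> 0" using assms(1)[of 0] by simp
  have "\<bar>\<Sum>j<M. w j\<bar> \<le> (\<Sum>j<M. \<bar>w j\<bar>)" by (rule sum_abs)
  also have "\<dots> = (\<Sum>j\<in>{..<M} \<inter> T. \<bar>w j\<bar>)"
    by (rule sum.mono_neutral_right) (auto simp: sub T_def)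
  also have "\<dots> \<le> (\<Sum>j\<in>T. \<bar>w j\<bar>)"
    by (rule sum_mono2) (auto simp: T_def)
  also have "\<dots> \<le> (\<Sum>j\<in>T. W)" by (rule sum_mono) (rule assms(1))
  also have "\<dots> \<le> 2 * W" using W0 by (simp add: T_def)
  finally show ?thesis .
qed

lemma lip_real:
  fixes f f' :: "real \<Rightarrow> real"
  assumes "\<And>z. (f has_real_derivative f' z) (at z)" "\<And>z. \<bar>f' z\<bar> \<le> B"
  shows "\<bar>f x - f y\<bar> \<le> B * \<bar>x - y\<bar>"
proof -
  have *: "\<bar>f b - f a\<bar> \<le> B * \<bar>b - a\<bar>" if "a < b" for a b
  proof -
    obtain z where "f b - f a = (b - a) * f' z" using MVT2[OF \<open>a < b\<close>, of f f'] assms(1) by blast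
    hence "\<bar>f b - f a\<bar> = \<bar>b - a\<bar> * \<bar>f' z\<bar>" by (simp add: abs_mult)
    also have "\<dots> \<le> \<bar>b - a\<bar> * B" by (rule mult_left_mono) (auto simp: assms(2))
    finally show ?thesis by (simp add: mult.commute)
  qed
  consider "x < y" | "x = y" | "y < x" by linarith
  thus ?thesis
  proof cases
    case 1 thus ?thesis using *[OF 1] by (simp add: abs_minus_commute)
  next
    case 2 thus ?thesis using assms(2)[of 0] by simp
  next
    case 3 thus ?thesis using *[OF 3] by simp
  qed
qed

lemma EF_d[derivative_intros]:
  "(f has_real_derivative f') (at t) \<Longrightarrow> ((\<lambda>t. E0 (f t)) has_real_derivative E1 (f t) * f') (at t)"
  "(f has_real_derivative f') (at t) \<Longrightarrow> ((\<lambda>t. E1 (f t)) has_real_derivative E2 (f t) * f') (at t)"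
  "(f has_real_derivative f') (at t) \<Longrightarrow> ((\<lambda>t. E2 (f t)) has_real_derivative E3 (f t) * f') (at t)"
  "(f has_real_derivative f') (at t) \<Longrightarrow> ((\<lambda>t. F0 (f t)) has_real_derivative F1 (f t) * f') (at t)"
  "(f has_real_derivative f') (at t) \<Longrightarrow> ((\<lambda>t. F1 (f t)) has_real_derivative F2 (f t) * f') (at t)"
  "(f has_real_derivative f') (at t) \<Longrightarrow> ((\<lambda>t. F2 (f t)) has_real_derivative F3 (f t) * f') (at t)"
  by (rule DERIV_chain2[OF E0_d] DERIV_chain2[OF E1_d] DERIV_chain2[OF E2_d]
      DERIV_chain2[OF F0_d] DERIV_chain2[OF F1_d] DERIV_chain2[OF F2_d]; assumption)+

definition P0 :: "(nat \<Rightarrow> real) \<Rightarrow> (nat \<Rightarrow> real) \<Rightarrow> nat \<Rightarrow> real \<Rightarrow> real" where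
  "P0 c a N x = (\<Sum>j<Suc N. c j * E0 (x - real j) + a j * F0 (x - real j))"
definition P1 :: "(nat \<Rightarrow> real) \<Rightarrow> (nat \<Rightarrow> real) \<Rightarrow> nat \<Rightarrow> real \<Rightarrow> real" where
  "P1 c a N x = (\<Sum>j<Suc N. c j * E1 (x - real j) + a j * F1 (x - real j))"
definition P2 :: "(nat \<Rightarrow> real) \<Rightarrow> (nat \<Rightarrow> real) \<Rightarrow> nat \<Rightarrow> real \<Rightarrow> real" where
  "P2 c a N x = (\<Sum>j<Suc N. c j * E2 (x - real j) + a j * F2 (x - real j))"
definition P3 :: "(nat \<Rightarrow> real) \<Rightarrow> (nat \<Rightarrow> real) \<Rightarrow> nat \<Rightarrow> real \<Rightarrow> real" where
  "P3 c a N x = (\<Sum>j<Suc N. c j * E3 (x - real j) + a j * F3 (x - real j))"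

lemma P0_d: "(P0 c a N has_real_derivative P1 c a N x) (at x)"
  unfolding P0_def P1_def by (auto intro!: derivative_eq_intros simp: mult.commute)
lemma P1_d: "(P1 c a N has_real_derivative P2 c a N x) (at x)"
  unfolding P1_def P2_def by (auto intro!: derivative_eq_intros simp: mult.commute)
lemma P2_d: "(P2 c a N has_real_derivative P3 c a N x) (at x)"
  unfolding P2_def P3_def by (auto intro!: derivative_eq_intros simp: mult.commute)

lemma P2_cont: "isCont (P2 c a N) x"
  using P2_d DERIV_isCont by blast

lemma P_int:
  assumes "k \<le> N"
  shows "P1 c a N (real k) = c k" "P2 c a N (real k) = a k"
proof -
  have "(\<Sum>j<Suc N. c j * E1 (real k - real j) + a j * F1 (real k - real j)) = (\<Sum>j<Suc N. if j = k then c k else 0)"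
    by (rule sum.cong) (auto simp: EF_int)
  thus "P1 c a N (real k) = c k" using assms by (simp add: P1_def)
  have "(\<Sum>j<Suc N. c j * E2 (real k - real j) + a j * F2 (real k - real j)) = (\<Sum>j<Suc N. if j = k then a k else 0)"
    by (rule sum.cong) (auto simp: EF_int)
  thus "P2 c a N (real k) = a k" using assms by (simp add: P2_def)
qed

lemma sum_bound:
  fixes Ef Ff :: "real \<Rightarrow> real"
  assumes "\<And>t. \<bar>Ef t\<bar> \<le> BE" "\<And>t. \<bar>Ff t\<bar> \<le> BF"
    "\<And>t. \<bar>t\<bar> \<ge> 1 \<Longrightarrow> Ef t = 0" "\<And>t. \<bar>t\<bar> \<ge> 1 \<Longrightarrow> Ff t = 0"
    "\<And>j. \<bar>c j\<bar> \<le> 1" "\<And>j. \<bar>a j\<bar> \<le> 2"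
  shows "\<bar>\<Sum>j<M. c j * Ef (x - real j) + a j * Ff (x - real j)\<bar> \<le> 2 * (BE + 2 * BF)"
proof (rule two_term)
  fix j
  have "\<bar>c j * Ef (x - real j) + a j * Ff (x - real j)\<bar> \<le> \<bar>c j\<bar> * \<bar>Ef (x - real j)\<bar> + \<bar>a j\<bar> * \<bar>Ff (x - real j)\<bar>"
    by (metis abs_mult abs_triangle_ineq)
  also have "\<dots> \<le> 1 * BE + 2 * BF"
    by (intro add_mono mult_mono assms) auto
  finally show "\<bar>c j * Ef (x - real j) + a j * Ff (x - real j)\<bar> \<le> BE + 2 * BF" by simp
next
  fix j
  assume "c j * Ef (x - real j) + a j * Ff (x - real j) \<noteq> 0"
  show "\<bar>x - real j\<bar> < 1"
  proof (rule ccontr)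
    assume "\<not> \<bar>x - real j\<bar> < 1"
    hence "\<bar>x - real j\<bar> \<ge> 1" by simp
    thus False using assms(3,4) \<open>c j * Ef (x - real j) + a j * Ff (x - real j) \<noteq> 0\<close> by simp
  qed
qed



definition e1 :: "real^2" where "e1 = axis 1 1"
definition e2 :: "real^2" where "e2 = axis 2 1"
definition M1 :: "real^2^2" where "M1 = axis 1 (axis 1 1)"
definition M2 :: "real^2^2" where "M2 = axis 2 (axis 2 1)"

lemma e_comp[simp]: "e1 $ 1 = 1" "e1 $ 2 = 0" "e2 $ 1 = 0" "e2 $ 2 = 1"
  by (simp_all add: e1_def e2_def axis_def)

lemma M_mv: "M1 *v v = v$1 *\<^sub>R e1" "M2 *v v = v$2 *\<^sub>R e2"
  by (simp_all add: vec_eq_iff forall_2 matrix_vector_mult_def sum_2 axis_def M1_def M2_def e1_def e2_def)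

lemma inner_e: "(a *\<^sub>R e1 + b *\<^sub>R e2) \<bullet> v = a * v$1 + b * v$2"
  by (simp add: inner_vec_def sum_2)

lemma norm_e1: "norm e1 = 1" by (simp add: e1_def)
lemma norm_e2: "norm e2 = 1" by (simp add: e2_def)

lemma vec2_eq: "(x::real^2) = y \<longleftrightarrow> x$1 = y$1 \<and> x$2 = y$2"
  by (simp add: vec_eq_iff forall_2)

theorem theorem3p3:
  fixes \<kappa> :: real
  assumes "0 \<le> \<kappa>" and "\<kappa> < 1"
  shows "\<exists>lo hi LH::real. \<forall>\<epsilon>::real. \<forall>\<theta>::nat \<Rightarrow> real^2.
     0 < \<epsilon> \<and> \<epsilon> < 1 \<and> admissible_residuals \<kappa> \<theta> \<longrightarrow>
     (let k\<epsilon> = nat \<lceil>1 / \<epsilon>\<^sup>2\<rceil> in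
      \<exists>(h::real^2 \<Rightarrow> real) (g::real^2 \<Rightarrow> real^2) (H::real^2 \<Rightarrow> real^2^2) (Lg::real).
        (\<forall>x. (h has_derivative (\<lambda>v. g x \<bullet> v)) (at x)) \<and>
        (\<forall>x. (g has_derivative (\<lambda>v. H x *v v)) (at x)) \<and>
        continuous_on UNIV H \<and>
        Lg-lipschitz_on UNIV g \<and>
        (\<forall>x. lo \<le> h x \<and> h x \<le> hi) \<and>
        (\<exists>z. inexact_newton_run g H \<theta> z k\<epsilon>) \<and>
        (\<forall>z. inexact_newton_run g H \<theta> z k\<epsilon> \<longrightarrow>
           (\<forall>k\<le>k\<epsilon>. pos_def_mat (H (z k))) \<and>
           (\<forall>k<k\<epsilon>. LH-lipschitz_on (closed_segment (z k) (z (Suc k))) H) \<and>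
           (\<forall>k<k\<epsilon>. norm (g (z k)) > \<epsilon>) \<and>
           norm (g (z k\<epsilon>)) \<le> \<epsilon> * sqrt (1 + \<epsilon>\<^sup>2)))"
proof -
  obtain BE0 where BE0: "\<And>t. \<bar>E0 t\<bar> \<le> BE0" using bound_ex[of E0] E_cont EF_vanish by blast
  obtain BF0 where BF0: "\<And>t. \<bar>F0 t\<bar> \<le> BF0" using bound_ex[of F0] E_cont EF_vanish by blast
  obtain BE2 where BE2: "\<And>t. \<bar>E2 t\<bar> \<le> BE2" using bound_ex[of E2] E_cont EF_vanish by blast
  obtain BF2 where BF2: "\<And>t. \<bar>F2 t\<bar> \<le> BF2" using bound_ex[of F2] E_cont EF_vanish by blast
  obtain BE3 where BE3: "\<And>t. \<bar>E3 t\<bar> \<le> BE3" using bound_ex[of E3] E_cont EF_vanish by blast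
  obtain BF3 where BF3: "\<And>t. \<bar>F3 t\<bar> \<le> BF3" using bound_ex[of F3] E_cont EF_vanish by blast
  define W0 where "W0 = 2 * (BE0 + 2 * BF0)"
  define W2 where "W2 = 2 * (BE2 + 2 * BF2)"
  define W3 where "W3 = 2 * (BE3 + 2 * BF3)"
  have W2pos: "W2 \<ge> 0" unfolding W2_def using BE2[of 0] BF2[of 0] abs_ge_zero[of "E2 0"] abs_ge_zero[of "F2 0"] by (smt (verit))
  have W3pos: "W3 \<ge> 0" unfolding W3_def using BE3[of 0] BF3[of 0] abs_ge_zero[of "E3 0"] abs_ge_zero[of "F3 0"] by (smt (verit))
  show ?thesis
  proof (rule exI[of _ "- W0 - 1"], rule exI[of _ "W0 + 1"], rule exI[of _ "W3 * norm M1"], intro allI impI)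
    fix \<epsilon> :: real and \<theta> :: "nat \<Rightarrow> real^2"
    assume asm: "0 < \<epsilon> \<and> \<epsilon> < 1 \<and> admissible_residuals \<kappa> \<theta>"
    hence th: "\<And>k i. \<bar>\<theta> k $ i\<bar> \<le> \<kappa>" by (simp add: admissible_residuals_def)
    define N where "N = nat \<lceil>1 / \<epsilon>\<^sup>2\<rceil>"
    define c where "c = (\<lambda>j::nat. if j < N then -1 else (0::real))"
    define a where "a = (\<lambda>j::nat. if j < N then 1 - \<theta> j $ 1 else 1)"
    have c_b: "\<And>j. \<bar>c j\<bar> \<le> 1" by (simp add: c_def)
    have a_b: "\<bar>a j\<bar> \<le> 2" for j using th[of j 1] assms by (auto simp: a_def abs_le_iff)
    have a_pos: "a j > 0" for j using th[of j 1] assms by (auto simp: a_def abs_le_iff)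
    define h where "h = (\<lambda>x::real^2. P0 c a N (x$1) - cos (x$2))"
    define g where "g = (\<lambda>x::real^2. P1 c a N (x$1) *\<^sub>R e1 + sin (x$2) *\<^sub>R e2)"
    define H where "H = (\<lambda>x::real^2. P2 c a N (x$1) *\<^sub>R M1 + cos (x$2) *\<^sub>R M2)"
    define z where "z = (\<lambda>k::nat. real k *\<^sub>R e1)"
    have gc: "g x $ 1 = P1 c a N (x$1)" "g x $ 2 = sin (x$2)" for x by (simp_all add: g_def)
    have Hc: "(H x *v v) $ 1 = P2 c a N (x$1) * v$1" "(H x *v v) $ 2 = cos (x$2) * v$2" for x v
      by (simp_all add: H_def scaleR_matrix_vector_assoc[symmetric] matrix_vector_mult_add_rdistrib M_mv)
    have zc: "z k $ 1 = real k" "z k $ 2 = 0" for k by (simp_all add: z_def)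
    have P0b: "\<bar>P0 c a N x\<bar> \<le> W0" for x
      unfolding P0_def W0_def by (rule sum_bound[OF BE0 BF0 _ _ c_b a_b]) (simp_all add: EF_vanish)
    have P2b: "\<bar>P2 c a N x\<bar> \<le> W2" for x
      unfolding P2_def W2_def by (rule sum_bound[OF BE2 BF2 _ _ c_b a_b]) (simp_all add: EF_vanish)
    have P3b: "\<bar>P3 c a N x\<bar> \<le> W3" for x
      unfolding P3_def W3_def by (rule sum_bound[OF BE3 BF3 _ _ c_b a_b]) (simp_all add: EF_vanish)

    have hd: "\<forall>x. (h has_derivative (\<lambda>v. g x \<bullet> v)) (at x)"
    proof
      fix x :: "real^2"
      have 1: "((\<lambda>x. P0 c a N (x$1)) has_derivative (\<lambda>v. v$1 * P1 c a N (x$1))) (at x)"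
        by (rule DERIV_compose_FDERIV[OF P0_d bounded_linear_imp_has_derivative[OF bounded_linear_vec_nth]])
      have 2: "((\<lambda>x. cos (x$2)) has_derivative (\<lambda>v. v$2 * (- sin (x$2)))) (at x)"
        by (rule DERIV_compose_FDERIV[OF DERIV_cos bounded_linear_imp_has_derivative[OF bounded_linear_vec_nth]])
      show "(h has_derivative (\<lambda>v. g x \<bullet> v)) (at x)"
        unfolding h_def
        by (rule has_derivative_eq_rhs[OF has_derivative_diff[OF 1 2]])
           (simp add: fun_eq_iff g_def inner_e mult.commute)
    qed
    have gd: "\<forall>x. (g has_derivative (\<lambda>v. H x *v v)) (at x)"
    proof
      fix x :: "real^2"
      have 1: "((\<lambda>x. P1 c a N (x$1)) has_derivative (\<lambda>v. v$1 * P2 c a N (x$1))) (at x)"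
        by (rule DERIV_compose_FDERIV[OF P1_d bounded_linear_imp_has_derivative[OF bounded_linear_vec_nth]])
      have 2: "((\<lambda>x. sin (x$2)) has_derivative (\<lambda>v. v$2 * cos (x$2))) (at x)"
        by (rule DERIV_compose_FDERIV[OF DERIV_sin bounded_linear_imp_has_derivative[OF bounded_linear_vec_nth]])
      show "(g has_derivative (\<lambda>v. H x *v v)) (at x)"
        unfolding g_def
        by (rule has_derivative_eq_rhs[OF has_derivative_add[OF has_derivative_scaleR_left[OF 1] has_derivative_scaleR_left[OF 2]]])
           (simp add: fun_eq_iff vec2_eq Hc mult.commute)
    qed
    have Hcont: "continuous_on UNIV H"
    proof (rule continuous_at_imp_continuous_on, rule ballI)
      fix x :: "real^2"
      have "isCont (\<lambda>x. P2 c a N (x$1)) x"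
        by (rule isCont_o2[OF _ P2_cont]) (intro continuous_intros)
      thus "isCont H x" unfolding H_def by (intro continuous_intros)
    qed
    have glip: "(W2 + 1)-lipschitz_on UNIV g"
    proof (rule lipschitz_onI)
      fix x y :: "real^2"
      have l1: "\<bar>P1 c a N (x$1) - P1 c a N (y$1)\<bar> \<le> W2 * \<bar>x$1 - y$1\<bar>"
        by (rule lip_real[OF P1_d P2b])
      have l2: "\<bar>sin (x$2) - sin (y$2)\<bar> \<le> 1 * \<bar>x$2 - y$2\<bar>"
        by (rule lip_real[OF DERIV_sin]) simp
      have n1: "\<bar>x$1 - y$1\<bar> \<le> norm (x - y)" "\<bar>x$2 - y$2\<bar> \<le> norm (x - y)"
        using component_le_norm_cart[of "x - y"] by auto
      have "g x - g y = (P1 c a N (x$1) - P1 c a N (y$1)) *\<^sub>R e1 + (sin (x$2) - sin (y$2)) *\<^sub>R e2"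
        by (simp add: g_def algebra_simps)
      hence "dist (g x) (g y) \<le> \<bar>P1 c a N (x$1) - P1 c a N (y$1)\<bar> + \<bar>sin (x$2) - sin (y$2)\<bar>"
        by (metis dist_norm norm_e1 norm_e2 norm_scaleR norm_triangle_ineq mult.right_neutral)
      also have "\<dots> \<le> W2 * norm (x - y) + 1 * norm (x - y)"
        using l1 l2 n1 W2pos by (meson add_mono mult_left_mono order_trans zero_le_one)
      finally show "dist (g x) (g y) \<le> (W2 + 1) * dist x y" by (simp add: dist_norm algebra_simps)
    qed (use W2pos in simp)
    have hb: "\<forall>x. - W0 - 1 \<le> h x \<and> h x \<le> W0 + 1"
      using P0b by (auto simp: h_def abs_le_iff) (smt (verit) cos_ge_minus_one cos_le_one)+
    have zrun: "inexact_newton_run g H \<theta> z N"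
    proof -
      have "H (z k) *v (z (Suc k) - z k) = - g (z k) + (\<chi> i. \<theta> k $ i * g (z k) $ i)" if "k < N" for k
        using that by (simp add: vec2_eq Hc gc zc P_int a_def c_def algebra_simps)
      thus ?thesis by (simp add: inexact_newton_run_def z_def)
    qed
    have uniq: "w k = z k" if run: "inexact_newton_run g H \<theta> w N" and "k \<le> N" for w k
      using \<open>k \<le> N\<close>
    proof (induction k)
      case 0 thus ?case using run by (simp add: inexact_newton_run_def z_def)
    next
      case (Suc k)
      hence kN: "k < N" and IH: "w k = z k" by auto
      have eq0: "H (w k) *v (w (Suc k) - w k) = - g (w k) + (\<chi> i. \<theta> k $ i * g (w k) $ i)"
        using run kN unfolding inexact_newton_run_def by blast
      have eq: "H (z k) *v (w (Suc k) - z k) = - g (z k) + (\<chi> i. \<theta> k $ i * g (z k) $ i)"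
        using eq0 unfolding IH .
      have "a k * (w (Suc k) $ 1 - real k) = a k"
        using arg_cong[OF eq, of "\<lambda>v. v $ 1"] kN by (simp add: Hc gc zc P_int a_def c_def algebra_simps)
      hence c1: "w (Suc k) $ 1 = real k + 1" using a_pos[of k] by simp
      have c2: "w (Suc k) $ 2 = 0"
        using arg_cong[OF eq, of "\<lambda>v. v $ 2"] by (simp add: Hc gc zc)
      show ?case using c1 c2 by (simp add: vec2_eq zc)
    qed
    have gz: "g (z k) = c k *\<^sub>R e1" if "k \<le> N" for k
      using that by (simp add: vec2_eq gc zc P_int)
    have Hlip: "(W3 * norm M1)-lipschitz_on (closed_segment (z k) (z (Suc k))) H" for k
    proof (rule lipschitz_onI)
      fix u y assume u: "u \<in> closed_segment (z k) (z (Suc k))" and y: "y \<in> closed_segment (z k) (z (Suc k))"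
      have u2: "u $ 2 = 0" using u by (auto simp: closed_segment_def zc)
      have y2: "y $ 2 = 0" using y by (auto simp: closed_segment_def zc)
      have "H u - H y = (P2 c a N (u$1) - P2 c a N (y$1)) *\<^sub>R M1"
        using u2 y2 by (simp add: H_def algebra_simps)
      hence "dist (H u) (H y) = \<bar>P2 c a N (u$1) - P2 c a N (y$1)\<bar> * norm M1"
        by (simp add: dist_norm)
      also have "\<dots> \<le> (W3 * \<bar>u$1 - y$1\<bar>) * norm M1"
        by (rule mult_right_mono[OF lip_real[OF P2_d P3b]]) simp
      also have "\<dots> \<le> (W3 * dist u y) * norm M1"
        using component_le_norm_cart[of "u - y" 1] W3pos
        by (intro mult_right_mono mult_left_mono) (auto simp: dist_norm)
      finally show "dist (H u) (H y) \<le> W3 * norm M1 * dist u y" by (simp add: algebra_simps)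
    qed (use W3pos in simp)
    have pd: "pos_def_mat (H (z k))" if "k \<le> N" for k
      unfolding pos_def_mat_def
    proof (intro allI impI)
      fix v :: "real^2" assume "v \<noteq> 0"
      hence "v$1 \<noteq> 0 \<or> v$2 \<noteq> 0" by (auto simp: vec2_eq)
      have "v \<bullet> (H (z k) *v v) = a k * (v$1)\<^sup>2 + (v$2)\<^sup>2"
        using that by (simp add: inner_vec_def sum_2 Hc zc P_int power2_eq_square)
      moreover have "a k * (v$1)\<^sup>2 + (v$2)\<^sup>2 > 0"
        using \<open>v$1 \<noteq> 0 \<or> v$2 \<noteq> 0\<close> a_pos[of k]
        by (metis add_nonneg_pos add_pos_nonneg mult_pos_pos mult_nonneg_nonneg less_imp_le zero_le_power2 zero_less_power2)
      ultimately show "0 < v \<bullet> (H (z k) *v v)" by simp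
    qed
    show "let k\<epsilon> = nat \<lceil>1 / \<epsilon>\<^sup>2\<rceil> in
      \<exists>(h::real^2 \<Rightarrow> real) (g::real^2 \<Rightarrow> real^2) (H::real^2 \<Rightarrow> real^2^2) (Lg::real).
        (\<forall>x. (h has_derivative (\<lambda>v. g x \<bullet> v)) (at x)) \<and>
        (\<forall>x. (g has_derivative (\<lambda>v. H x *v v)) (at x)) \<and>
        continuous_on UNIV H \<and>
        Lg-lipschitz_on UNIV g \<and>
        (\<forall>x. - W0 - 1 \<le> h x \<and> h x \<le> W0 + 1) \<and>
        (\<exists>z. inexact_newton_run g H \<theta> z k\<epsilon>) \<and>
        (\<forall>z. inexact_newton_run g H \<theta> z k\<epsilon> \<longrightarrow>
           (\<forall>k\<le>k\<epsilon>. pos_def_mat (H (z k))) \<and>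
           (\<forall>k<k\<epsilon>. (W3 * norm M1)-lipschitz_on (closed_segment (z k) (z (Suc k))) H) \<and>
           (\<forall>k<k\<epsilon>. norm (g (z k)) > \<epsilon>) \<and>
           norm (g (z k\<epsilon>)) \<le> \<epsilon> * sqrt (1 + \<epsilon>\<^sup>2))"
      unfolding Let_def N_def[symmetric]
    proof (rule exI[of _ h], rule exI[of _ g], rule exI[of _ H], rule exI[of _ "W2 + 1"], intro conjI)
      show "\<forall>x. (h has_derivative (\<lambda>v. g x \<bullet> v)) (at x)" by (rule hd)
      show "\<forall>x. (g has_derivative (\<lambda>v. H x *v v)) (at x)" by (rule gd)
      show "continuous_on UNIV H" by (rule Hcont)
      show "(W2 + 1)-lipschitz_on UNIV g" by (rule glip)
      show "\<forall>x. - W0 - 1 \<le> h x \<and> h x \<le> W0 + 1" by (rule hb)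
      show "\<exists>z. inexact_newton_run g H \<theta> z N" using zrun by blast
      show "\<forall>w. inexact_newton_run g H \<theta> w N \<longrightarrow>
           (\<forall>k\<le>N. pos_def_mat (H (w k))) \<and>
           (\<forall>k<N. (W3 * norm M1)-lipschitz_on (closed_segment (w k) (w (Suc k))) H) \<and>
           (\<forall>k<N. norm (g (w k)) > \<epsilon>) \<and>
           norm (g (w N)) \<le> \<epsilon> * sqrt (1 + \<epsilon>\<^sup>2)"
      proof (rule allI, rule impI, intro conjI)
        fix w assume run: "inexact_newton_run g H \<theta> w N"
        show "\<forall>k\<le>N. pos_def_mat (H (w k))" using pd uniq[OF run] by simp
        show "\<forall>k<N. (W3 * norm M1)-lipschitz_on (closed_segment (w k) (w (Suc k))) H"
          using Hlip uniq[OF run] by simp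
        show "\<forall>k<N. norm (g (w k)) > \<epsilon>"
          using uniq[OF run] gz asm by (simp add: c_def norm_e1)
        show "norm (g (w N)) \<le> \<epsilon> * sqrt (1 + \<epsilon>\<^sup>2)"
          using uniq[OF run] gz asm by (simp add: c_def)
      qed
    qed
  qed
qed

end
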